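(* Let $\lambda,\mu\in\mathbb{C}\setminus\{0,1\}$ and $a,b\in\mathbb{C}^n$ with $a\neq b$, let $G$ be the group generated by $f=(a,\lambda)$ and $g=(b,\mu)$, and let $L=\mathbb{C}(b-a)+a$. If $\overline{G(a)}=L$, then $\overline{G(z)}=L$ for every $z\in L$.
   Context: For $c\in\mathbb{C}^n$ and $\nu\in\mathbb{C}\setminus\{0,1\}$, $(c,\nu)$ denotes the map $z\mapsto\nu(z-c)+c$ of $\mathbb{C}^n$. $\mathbb{C}(b-a)+a=\{a+t(b-a):t\in\mathbb{C}\}$; $G(z)=\{h(z):h\in G\}$. *)

theory Defs
  imports "HOL-Analysis.Analysis"
begin

definition homothety :: "complex ^ 'n \<Rightarrow> complex \<Rightarrow> complex ^ 'n \<Rightarrow> complex ^ 'n" where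
  "homothety c \<nu> = (\<lambda>z. \<nu> *s (z - c) + c)"

inductive_set gen_group :: "('a \<Rightarrow> 'a) set \<Rightarrow> ('a \<Rightarrow> 'a) set" for S where
  gen_id: "id \<in> gen_group S"
| gen_left: "s \<in> S \<Longrightarrow> h \<in> gen_group S \<Longrightarrow> s \<circ> h \<in> gen_group S"
| gen_inv: "s \<in> S \<Longrightarrow> h \<in> gen_group S \<Longrightarrow> inv s \<circ> h \<in> gen_group S"

definition orbit :: "('a \<Rightarrow> 'a) set \<Rightarrow> 'a \<Rightarrow> 'a set" where
  "orbit G z = (\<lambda>h. h z) ` G"

definition cline :: "complex ^ 'n \<Rightarrow> complex ^ 'n \<Rightarrow> (complex ^ 'n) set" where
  "cline a b = {a + t *s (b - a) | t. True}"

end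

theory Submission
  imports Defs
begin

lemma norm_smult_vec: "norm (c *s (x::complex^'n)) = cmod c * norm x"
  unfolding norm_vec_def by (simp add: norm_mult L2_set_right_distrib)

lemma homothety_inv:
  assumes "\<nu> \<noteq> 0"
  shows "inv (homothety c \<nu>) = homothety c (inverse \<nu>)"
  by (rule inv_equality) (use assms in \<open>auto simp: homothety_def vec_eq_iff field_simps\<close>)

definition PL :: "complex ^ 'n \<Rightarrow> complex ^ 'n \<Rightarrow> complex \<Rightarrow> complex ^ 'n" where
  "PL a b t = a + t *s (b - a)"

lemma hom_a: "homothety a \<nu> (PL a b t) = PL a b (\<nu> * t)"
  by (simp add: homothety_def PL_def vec_eq_iff algebra_simps)
lemma hom_b: "homothety b \<nu> (PL a b t) = PL a b (\<nu> * (t - 1) + 1)"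
  by (simp add: homothety_def PL_def vec_eq_iff algebra_simps)

lemma PL_0: "PL a b 0 = a"
  by (simp_all add: PL_def)

lemma dist_PL: "dist (PL a b u) (PL a b v) = cmod (u - v) * norm (b - a)"
proof -
  have "PL a b u - PL a b v = (u - v) *s (b - a)"
    by (simp add: PL_def vec_eq_iff algebra_simps)
  thus ?thesis by (simp only: dist_norm norm_smult_vec)
qed

lemma cline_PL: "cline a b = range (PL a b)"
  by (auto simp: cline_def PL_def)

lemma gen_comp: "h1 \<in> gen_group S \<Longrightarrow> h2 \<in> gen_group S \<Longrightarrow> h1 \<circ> h2 \<in> gen_group S"
  by (induction h1 rule: gen_group.induct) (auto simp: comp_assoc intro: gen_group.intros)

lemma gen_mem: "s \<in> S \<Longrightarrow> s \<in> gen_group S"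
  using gen_group.gen_left[OF _ gen_group.gen_id] by fastforce

lemma gen_inv_mem: "s \<in> S \<Longrightarrow> inv s \<in> gen_group S"
  using gen_group.gen_inv[OF _ gen_group.gen_id] by fastforce

lemma gen_form:
  assumes "lam \<noteq> 0" "mu \<noteq> 0" "h \<in> gen_group {homothety a lam, homothety b mu}"
  shows "\<exists>\<alpha> \<beta>. (\<forall>t. h (PL a b t) = PL a b (\<alpha>*t+\<beta>)) \<and> \<alpha> \<noteq> 0
     \<and> (cmod lam = 1 \<and> cmod mu = 1 \<longrightarrow> cmod \<alpha> = 1)
     \<and> (lam \<in> \<real> \<and> mu \<in> \<real> \<longrightarrow> \<alpha> \<in> \<real> \<and> \<beta> \<in> \<real>)"
  using assms(3)
proof (induction h rule: gen_group.induct)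
  case gen_id
  show ?case by (rule exI[of _ 1], rule exI[of _ 0]) simp
next
  case (gen_left s h)
  then obtain \<alpha> \<beta> where ab: "\<forall>t. h (PL a b t) = PL a b (\<alpha>*t+\<beta>)" "\<alpha> \<noteq> 0"
     "cmod lam = 1 \<and> cmod mu = 1 \<longrightarrow> cmod \<alpha> = 1"
     "lam \<in> \<real> \<and> mu \<in> \<real> \<longrightarrow> \<alpha> \<in> \<real> \<and> \<beta> \<in> \<real>" by blast
  from gen_left(1) show ?case
  proof
    assume s: "s = homothety a lam"
    show ?case
      by (rule exI[of _ "lam*\<alpha>"], rule exI[of _ "lam*\<beta>"])
        (use ab assms in \<open>auto simp: s hom_a algebra_simps norm_mult\<close>)
  next
    assume "s \<in> {homothety b mu}"
    hence s: "s = homothety b mu" by simp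
    show ?case
      by (rule exI[of _ "mu*\<alpha>"], rule exI[of _ "mu*(\<beta>-1)+1"])
        (use ab assms in \<open>auto simp: s hom_b algebra_simps norm_mult\<close>)
  qed
next
  case (gen_inv s h)
  then obtain \<alpha> \<beta> where ab: "\<forall>t. h (PL a b t) = PL a b (\<alpha>*t+\<beta>)" "\<alpha> \<noteq> 0"
     "cmod lam = 1 \<and> cmod mu = 1 \<longrightarrow> cmod \<alpha> = 1"
     "lam \<in> \<real> \<and> mu \<in> \<real> \<longrightarrow> \<alpha> \<in> \<real> \<and> \<beta> \<in> \<real>" by blast
  from gen_inv(1) show ?case
  proof
    assume s: "s = homothety a lam"
    show ?case
      by (rule exI[of _ "inverse lam*\<alpha>"], rule exI[of _ "inverse lam*\<beta>"])
        (use ab assms in \<open>auto simp: s hom_a homothety_inv algebra_simps norm_mult norm_inverse\<close>)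
  next
    assume "s \<in> {homothety b mu}"
    hence s: "s = homothety b mu" by simp
    show ?case
      by (rule exI[of _ "inverse mu*\<alpha>"], rule exI[of _ "inverse mu*(\<beta>-1)+1"])
        (use ab assms in \<open>auto simp: s hom_b homothety_inv algebra_simps norm_mult norm_inverse\<close>)
  qed
qed

lemma hom_bij1: "\<nu> \<noteq> 0 \<Longrightarrow> homothety c (inverse \<nu>) (homothety c \<nu> z) = z"
  by (auto simp: homothety_def vec_eq_iff field_simps)
lemma hom_bij2: "\<nu> \<noteq> 0 \<Longrightarrow> homothety c \<nu> (homothety c (inverse \<nu>) z) = z"
  by (auto simp: homothety_def vec_eq_iff field_simps)

lemma gen_leftinv:
  assumes "lam \<noteq> 0" "mu \<noteq> 0" "h \<in> gen_group {homothety a lam, homothety b mu}"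
  shows "\<exists>k\<in>gen_group {homothety a lam, homothety b mu}. \<forall>z. k (h z) = z"
  using assms(3)
proof (induction h rule: gen_group.induct)
  case gen_id
  show ?case by (rule bexI[of _ id]) (auto intro: gen_group.gen_id)
next
  case (gen_left s h)
  then obtain k where k: "k \<in> gen_group {homothety a lam, homothety b mu}" "\<forall>z. k (h z) = z" by blast
  have "inv s \<in> gen_group {homothety a lam, homothety b mu}" using gen_left(1) by (rule gen_inv_mem)
  moreover have "\<forall>z. inv s (s z) = z" using gen_left(1) assms(1,2)
    by (auto simp: homothety_inv hom_bij1)
  ultimately show ?case using k
    by (intro bexI[of _ "k \<circ> inv s"] gen_comp) auto
next
  case (gen_inv s h)
  then obtain k where k: "k \<in> gen_group {homothety a lam, homothety b mu}" "\<forall>z. k (h z) = z" by blast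
  have "s \<in> gen_group {homothety a lam, homothety b mu}" using gen_inv(1) by (rule gen_mem)
  moreover have "\<forall>z. s (inv s z) = z" using gen_inv(1) assms(1,2)
    by (auto simp: homothety_inv hom_bij2)
  ultimately show ?case using k
    by (intro bexI[of _ "k \<circ> s"] gen_comp) auto
qed

lemma lattice_approx:
  fixes s \<rho> w :: complex
  assumes "Im \<rho> \<noteq> 0" "s \<noteq> 0"
  shows "\<exists>m n::int. cmod (w - (of_int m * s + of_int n * (\<rho> * s))) \<le> cmod s * (1 + cmod \<rho>) / 2"
proof -
  define q where "q = w / s"
  define y where "y = Im q / Im \<rho>"
  define x where "x = Re q - y * Re \<rho>"
  have q: "q = of_real x + of_real y * \<rho>"
    using assms(1) by (simp add: complex_eq_iff x_def y_def)
  define m where "m = round x"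
  define n where "n = round y"
  have w: "w = s * q" using assms(2) by (simp add: q_def)
  have "w - (of_int m * s + of_int n * (\<rho> * s)) = s * (of_real (x - of_int m) + of_real (y - of_int n) * \<rho>)"
    by (simp add: w q algebra_simps)
  also have "cmod \<dots> \<le> cmod s * (\<bar>x - of_int m\<bar> + \<bar>y - of_int n\<bar> * cmod \<rho>)"
  proof -
    have e1: "cmod (of_real (x - of_int m)) = \<bar>x - of_int m\<bar>" by (rule norm_of_real)
    have e2: "cmod (of_real (y - of_int n)) = \<bar>y - of_int n\<bar>" by (rule norm_of_real)
    have "cmod (of_real (x - of_int m) + of_real (y - of_int n) * \<rho>)
       \<le> cmod (of_real (x - of_int m)) + cmod (of_real (y - of_int n) * \<rho>)"
      by (rule norm_triangle_ineq)
    also have "\<dots> = \<bar>x - of_int m\<bar> + \<bar>y - of_int n\<bar> * cmod \<rho>"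
      by (simp only: e1 norm_mult e2)
    finally show ?thesis unfolding norm_mult by (intro mult_left_mono) auto
  qed
  also have "\<dots> \<le> cmod s * (1/2 + 1/2 * cmod \<rho>)"
    using of_int_round_abs_le[of x] of_int_round_abs_le[of y]
    by (intro mult_left_mono add_mono mult_right_mono) (auto simp: m_def n_def abs_minus_commute)
  finally show ?thesis by (intro exI[of _ m] exI[of _ n]) (simp add: field_simps)
qed

definition Tr :: "complex ^ 'n \<Rightarrow> complex ^ 'n \<Rightarrow> complex \<Rightarrow> complex \<Rightarrow> complex set" where
  "Tr a b lam mu = {s. \<exists>h\<in>gen_group {homothety a lam, homothety b mu}. \<forall>t. h (PL a b t) = PL a b (t + s)}"

lemma Tr_add: "s \<in> Tr a b lam mu \<Longrightarrow> s' \<in> Tr a b lam mu \<Longrightarrow> s + s' \<in> Tr a b lam mu"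
  unfolding Tr_def
proof clarify
  fix h h' assume h: "h \<in> gen_group {homothety a lam, homothety b mu}" "\<forall>t. h (PL a b t) = PL a b (t + s)"
    and h': "h' \<in> gen_group {homothety a lam, homothety b mu}" "\<forall>t. h' (PL a b t) = PL a b (t + s')"
  show "\<exists>h\<in>gen_group {homothety a lam, homothety b mu}. \<forall>t. h (PL a b t) = PL a b (t + (s + s'))"
    using h h' by (intro bexI[of _ "h \<circ> h'"] gen_comp) (auto simp: algebra_simps)
qed

lemma Tr_0: "0 \<in> Tr a b lam mu"
  unfolding Tr_def by (auto intro!: bexI[of _ id] gen_group.gen_id)

lemma Tr_neg: assumes "lam \<noteq> 0" "mu \<noteq> 0" "s \<in> Tr a b lam mu" shows "- s \<in> Tr a b lam mu"
proof -
  obtain h where h: "h \<in> gen_group {homothety a lam, homothety b mu}" "\<forall>t. h (PL a b t) = PL a b (t + s)"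
    using assms(3) unfolding Tr_def by blast
  obtain k where k: "k \<in> gen_group {homothety a lam, homothety b mu}" "\<forall>z. k (h z) = z"
    using gen_leftinv[OF assms(1,2) h(1)] by blast
  have "\<forall>t. k (PL a b t) = PL a b (t + - s)"
  proof
    fix t
    have "PL a b t = h (PL a b (t - s))" using h(2) by simp
    thus "k (PL a b t) = PL a b (t + - s)" using k(2) by simp
  qed
  thus ?thesis using k(1) unfolding Tr_def by blast
qed

lemma Tr_conj_a: assumes "lam \<noteq> 0" "mu \<noteq> 0" "s \<in> Tr a b lam mu"
  shows "lam * s \<in> Tr a b lam mu" "inverse lam * s \<in> Tr a b lam mu"
proof -
  obtain h where h: "h \<in> gen_group {homothety a lam, homothety b mu}" "\<forall>t. h (PL a b t) = PL a b (t + s)"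
    using assms(3) unfolding Tr_def by blast
  have f: "homothety a lam \<in> gen_group {homothety a lam, homothety b mu}" by (rule gen_mem) simp
  have f': "homothety a (inverse lam) \<in> gen_group {homothety a lam, homothety b mu}"
    using gen_inv_mem[of "homothety a lam" "{homothety a lam, homothety b mu}"] assms(1)
    by (simp add: homothety_inv)
  have "\<forall>t. (homothety a lam \<circ> h \<circ> homothety a (inverse lam)) (PL a b t) = PL a b (t + lam * s)"
    using h(2) assms(1)
    apply (simp add: hom_a)
    apply (intro allI arg_cong[where f="PL a b"])
    apply (simp add: field_simps)
    done
  thus "lam * s \<in> Tr a b lam mu" unfolding Tr_def using f f' h(1) by (blast intro: gen_comp)
  have "\<forall>t. (homothety a (inverse lam) \<circ> h \<circ> homothety a lam) (PL a b t) = PL a b (t + inverse lam * s)"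
    using h(2) assms(1)
    apply (simp add: hom_a)
    apply (intro allI arg_cong[where f="PL a b"])
    apply (simp add: field_simps)
    done
  thus "inverse lam * s \<in> Tr a b lam mu" unfolding Tr_def using f f' h(1) by (blast intro: gen_comp)
qed

lemma Tr_conj_b: assumes "lam \<noteq> 0" "mu \<noteq> 0" "s \<in> Tr a b lam mu"
  shows "mu * s \<in> Tr a b lam mu" "inverse mu * s \<in> Tr a b lam mu"
proof -
  obtain h where h: "h \<in> gen_group {homothety a lam, homothety b mu}" "\<forall>t. h (PL a b t) = PL a b (t + s)"
    using assms(3) unfolding Tr_def by blast
  have f: "homothety b mu \<in> gen_group {homothety a lam, homothety b mu}" by (rule gen_mem) simp
  have f': "homothety b (inverse mu) \<in> gen_group {homothety a lam, homothety b mu}"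
    using gen_inv_mem[of "homothety b mu" "{homothety a lam, homothety b mu}"] assms(2)
    by (simp add: homothety_inv)
  have "\<forall>t. (homothety b mu \<circ> h \<circ> homothety b (inverse mu)) (PL a b t) = PL a b (t + mu * s)"
    using h(2) assms(2)
    apply (simp add: hom_b)
    apply (intro allI arg_cong[where f="PL a b"])
    apply (simp add: field_simps)
    done
  thus "mu * s \<in> Tr a b lam mu" unfolding Tr_def using f f' h(1) by (blast intro: gen_comp)
  have "\<forall>t. (homothety b (inverse mu) \<circ> h \<circ> homothety b mu) (PL a b t) = PL a b (t + inverse mu * s)"
    using h(2) assms(2)
    apply (simp add: hom_b)
    apply (intro allI arg_cong[where f="PL a b"])
    apply (simp add: field_simps)
    done
  thus "inverse mu * s \<in> Tr a b lam mu" unfolding Tr_def using f f' h(1) by (blast intro: gen_comp)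
qed

lemma Tr_comm: assumes "lam \<noteq> 0" "mu \<noteq> 0"
  shows "(1 - mu) * (lam - 1) \<in> Tr a b lam mu"
proof -
  let ?G = "gen_group {homothety a lam, homothety b mu}"
  have f: "homothety a lam \<in> ?G" by (rule gen_mem) simp
  have f': "homothety a (inverse lam) \<in> ?G"
    using gen_inv_mem[of "homothety a lam" "{homothety a lam, homothety b mu}"] assms(1)
    by (simp add: homothety_inv)
  have g: "homothety b mu \<in> ?G" by (rule gen_mem) simp
  have g': "homothety b (inverse mu) \<in> ?G"
    using gen_inv_mem[of "homothety b mu" "{homothety a lam, homothety b mu}"] assms(2)
    by (simp add: homothety_inv)
  have "\<forall>t. (homothety a lam \<circ> homothety b mu \<circ> homothety a (inverse lam) \<circ> homothety b (inverse mu)) (PL a b t)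
      = PL a b (t + (1 - mu) * (lam - 1))"
    using assms
    apply (simp add: hom_a hom_b)
    apply (intro allI arg_cong[where f="PL a b"])
    apply (simp add: field_simps)
    done
  moreover have "homothety a lam \<circ> homothety b mu \<circ> homothety a (inverse lam) \<circ> homothety b (inverse mu) \<in> ?G"
    using f f' g g' by (intro gen_comp)
  ultimately show ?thesis unfolding Tr_def by blast
qed

lemma Tr_nat: "s \<in> Tr a b lam mu \<Longrightarrow> of_nat n * s \<in> Tr a b lam mu"
  by (induction n) (auto simp: Tr_0 algebra_simps intro: Tr_add)

lemma Tr_int: assumes "lam \<noteq> 0" "mu \<noteq> 0" "s \<in> Tr a b lam mu" shows "of_int m * s \<in> Tr a b lam mu"
proof (cases "m \<ge> 0")
  case True
  then obtain n where "m = int n" by (metis nonneg_eq_int)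
  thus ?thesis using Tr_nat[OF assms(3)] by simp
next
  case False
  obtain n where "m = - int n" using False by (intro that[of "nat (-m)"]) simp
  thus ?thesis using Tr_neg[OF assms(1,2) Tr_nat[OF assms(3), of n]] by simp
qed

lemma Tr_pow: assumes "lam \<noteq> 0" "mu \<noteq> 0" "s \<in> Tr a b lam mu"
  and "\<nu> \<in> {lam, inverse lam, mu, inverse mu}"
shows "\<nu> ^ n * s \<in> Tr a b lam mu"
proof (induction n)
  case 0 thus ?case using assms(3) by simp
next
  case (Suc n)
  have "\<nu> * (\<nu> ^ n * s) \<in> Tr a b lam mu"
    using assms(4) Tr_conj_a[OF assms(1,2) Suc] Tr_conj_b[OF assms(1,2) Suc] by auto
  thus ?case by (simp add: mult.assoc)
qed

theorem lemma3p8: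
  fixes a b :: "complex ^ 'n" and lam \<mu> :: complex
  assumes "lam \<notin> {0, 1}" and "\<mu> \<notin> {0, 1}" and "a \<noteq> b"
    and "closure (orbit (gen_group {homothety a lam, homothety b \<mu>}) a) = cline a b"
  shows "\<forall>z \<in> cline a b. closure (orbit (gen_group {homothety a lam, homothety b \<mu>}) z) = cline a b"
proof
  let ?G = "gen_group {homothety a lam, homothety b \<mu>}"
  have l0: "lam \<noteq> 0" "\<mu> \<noteq> 0" "lam \<noteq> 1" "\<mu> \<noteq> 1" using assms(1,2) by auto
  have nba: "norm (b - a) > 0" using assms(3) by simp
  have hPL: "\<And>h t. h \<in> ?G \<Longrightarrow> h (PL a b t) \<in> cline a b"
    using gen_form[OF l0(1,2)] unfolding cline_PL by fastforce
  have orbit_iff: "\<And>y z. y \<in> orbit ?G z \<longleftrightarrow> (\<exists>h\<in>?G. y = h z)"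
    by (auto simp: orbit_def)
  fix z assume zL: "z \<in> cline a b"
  then obtain t0 where z: "z = PL a b t0" by (auto simp: cline_PL)
  have sub: "orbit ?G z \<subseteq> cline a b"
    using hPL z by (auto simp: orbit_iff)
  have up: "closure (orbit ?G z) \<subseteq> cline a b"
    using closure_mono[OF sub] assms(4) closure_closure by metis
  have aPL: "a = PL a b 0" by (simp add: PL_0)
  have low: "cline a b \<subseteq> closure (orbit ?G z)"
  proof (cases "lam \<in> \<real> \<and> \<mu> \<in> \<real>")
    case True
    have "PL a b \<i> \<in> closure (orbit ?G a)" using assms(4) by (simp add: cline_PL)
    then obtain y where y: "y \<in> orbit ?G a" "dist y (PL a b \<i>) < norm (b - a)"
      using nba unfolding closure_approachable by blast
    then obtain h where h: "h \<in> ?G" "y = h a" by (auto simp: orbit_iff)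
    obtain \<alpha> \<beta> where ab: "\<forall>t. h (PL a b t) = PL a b (\<alpha>*t+\<beta>)" "\<beta> \<in> \<real>"
      using gen_form[OF l0(1,2) h(1)] True by blast
    have "y = PL a b \<beta>" using h(2) ab(1) aPL by (metis add_0 mult_zero_right)
    hence "dist y (PL a b \<i>) = cmod (\<beta> - \<i>) * norm (b - a)" by (simp add: dist_PL)
    moreover have "cmod (\<beta> - \<i>) \<ge> 1"
    proof -
      have "\<bar>Im (\<beta> - \<i>)\<bar> \<le> cmod (\<beta> - \<i>)" by (rule abs_Im_le_cmod)
      moreover have "Im \<beta> = 0" using ab(2) by (simp add: complex_is_Real_iff)
      ultimately show ?thesis by simp
    qed
    ultimately have "dist y (PL a b \<i>) \<ge> norm (b - a)" using nba by simp
    with y(2) show ?thesis by simp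
  next
    case notreal: False
    show ?thesis
    proof (cases "cmod lam = 1 \<and> cmod \<mu> = 1")
      case iso: True
      have aclose: "\<exists>k\<in>?G. dist (k z) a < e" if e: "e > 0" for e
      proof -
        have "z \<in> closure (orbit ?G a)" using zL assms(4) by simp
        then obtain y where y: "y \<in> orbit ?G a" "dist y z < e"
          using e unfolding closure_approachable by blast
        then obtain h where h: "h \<in> ?G" "y = h a" by (auto simp: orbit_iff)
        obtain \<alpha> \<beta> where ab: "\<forall>t. h (PL a b t) = PL a b (\<alpha>*t+\<beta>)"
          using gen_form[OF l0(1,2) h(1)] by blast
        have ha: "h a = PL a b \<beta>" using ab aPL by (metis add_0 mult_zero_right)
        obtain k where k: "k \<in> ?G" "\<forall>z. k (h z) = z" using gen_leftinv[OF l0(1,2) h(1)] by blast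
        obtain \<alpha>' \<beta>' where ab': "\<forall>t. k (PL a b t) = PL a b (\<alpha>'*t+\<beta>')" "cmod \<alpha>' = 1"
          using gen_form[OF l0(1,2) k(1)] iso by blast
        have "a = k (h a)" using k(2) by simp
        also have "\<dots> = PL a b (\<alpha>' * \<beta> + \<beta>')" using ha ab' by simp
        finally have a2: "a = PL a b (\<alpha>' * \<beta> + \<beta>')" .
        have kz: "k z = PL a b (\<alpha>'*t0+\<beta>')" using ab'(1) z by simp
        have eq: "(\<alpha>'*t0+\<beta>') - (\<alpha>' * \<beta> + \<beta>') = \<alpha>' * (t0 - \<beta>)" by (simp add: algebra_simps)
        have "dist (k z) a = cmod ((\<alpha>'*t0+\<beta>') - (\<alpha>' * \<beta> + \<beta>')) * norm (b - a)"
          using dist_PL[of a b "\<alpha>'*t0+\<beta>'" "\<alpha>' * \<beta> + \<beta>'"] kz a2 by metis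
        also have "\<dots> = cmod (\<alpha>' * (t0 - \<beta>)) * norm (b - a)" by (simp only: eq)
        also have "\<dots> = cmod (t0 - \<beta>) * norm (b - a)" using ab'(2) by (simp add: norm_mult)
        also have "\<dots> = dist y z" using h(2) ha z by (simp add: dist_PL norm_minus_commute)
        finally show ?thesis using y(2) k(1) by (intro bexI[of _ k]) auto
      qed
      show ?thesis
      proof
        fix y assume yL: "y \<in> cline a b"
        show "y \<in> closure (orbit ?G z)"
          unfolding closure_approachable
        proof (intro allI impI)
          fix e :: real assume e: "e > 0"
          have "y \<in> closure (orbit ?G a)" using yL assms(4) by simp
          then obtain y' where y': "y' \<in> orbit ?G a" "dist y' y < e/2"
            using e unfolding closure_approachable by (meson half_gt_zero)
          then obtain h where h: "h \<in> ?G" "y' = h a" by (auto simp: orbit_iff)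
          obtain \<alpha> \<beta> where ab: "\<forall>t. h (PL a b t) = PL a b (\<alpha>*t+\<beta>)" "cmod \<alpha> = 1"
            using gen_form[OF l0(1,2) h(1)] iso by blast
          obtain k where k: "k \<in> ?G" "dist (k z) a < e/2" using aclose[of "e/2"] e by auto
          obtain u where u: "k z = PL a b u" using hPL[OF k(1), of t0] z by (auto simp: cline_PL)
          have "dist (h (k z)) (h a) = cmod (\<alpha> * u) * norm (b - a)"
            using ab(1) u aPL by (metis dist_PL add_0 mult_zero_right add_diff_cancel_right')
          also have "\<dots> = cmod u * norm (b - a)" using ab(2) by (simp add: norm_mult)
          also have "\<dots> = dist (k z) a" using u aPL by (metis dist_PL diff_zero)
          finally have d1: "dist (h (k z)) (h a) < e/2" using k(2) by simp
          have "dist (h (k z)) y \<le> dist (h (k z)) (h a) + dist (h a) y" by (rule dist_triangle)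
          also have "\<dots> < e" using d1 y'(2) h(2) by simp
          finally have "dist ((h \<circ> k) z) y < e" by simp
          moreover have "(h \<circ> k) z \<in> orbit ?G z" using gen_comp[OF h(1) k(1)] unfolding orbit_iff by (intro bexI[of _ "h \<circ> k"]) auto
          ultimately show "\<exists>x\<in>orbit ?G z. dist x y < e" by blast
        qed
      qed
    next
      case noniso: False
      obtain \<nu> where \<nu>: "\<nu> \<in> {lam, inverse lam, \<mu>, inverse \<mu>}" "cmod \<nu> < 1"
      proof -
        have "cmod lam \<noteq> 1 \<or> cmod \<mu> \<noteq> 1" using noniso by blast
        thus ?thesis
        proof
          assume "cmod lam \<noteq> 1"
          hence "cmod lam < 1 \<or> cmod (inverse lam) < 1"
            using l0(1) by (auto simp: norm_inverse intro: inverse_less_1_iff[THEN iffD2])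
          thus ?thesis using that by auto
        next
          assume "cmod \<mu> \<noteq> 1"
          hence "cmod \<mu> < 1 \<or> cmod (inverse \<mu>) < 1"
            using l0(2) by (auto simp: norm_inverse intro: inverse_less_1_iff[THEN iffD2])
          thus ?thesis using that by auto
        qed
      qed
      have \<nu>0: "\<nu> \<noteq> 0" using \<nu>(1) l0 by auto
      obtain \<rho> where \<rho>: "\<rho> \<in> {lam, \<mu>}" "Im \<rho> \<noteq> 0"
        using notreal by (auto simp: complex_is_Real_iff)
      define \<beta>0 where "\<beta>0 = (1 - \<mu>) * (lam - 1)"
      have \<beta>0: "\<beta>0 \<in> Tr a b lam \<mu>" "\<beta>0 \<noteq> 0"
        using Tr_comm[OF l0(1,2)] l0 by (auto simp: \<beta>0_def)
      show ?thesis
      proof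
        fix y assume "y \<in> cline a b"
        then obtain w where y: "y = PL a b w" by (auto simp: cline_PL)
        show "y \<in> closure (orbit ?G z)"
          unfolding closure_approachable
        proof (intro allI impI)
          fix e :: real assume e: "e > 0"
          define D where "D = cmod \<beta>0 * (1 + cmod \<rho>) * norm (b - a)"
          have D: "D > 0" using \<beta>0(2) nba by (simp add: D_def add_pos_nonneg)
          obtain n where n: "cmod \<nu> ^ n < e / D"
            using real_arch_pow_inv[OF divide_pos_pos[OF e D] \<nu>(2)] by blast
          define s where "s = \<nu> ^ n * \<beta>0"
          have s: "s \<in> Tr a b lam \<mu>" "s \<noteq> 0"
            using Tr_pow[OF l0(1,2) \<beta>0(1) \<nu>(1)] \<nu>0 \<beta>0(2) by (auto simp: s_def)
          have \<rho>s: "\<rho> * s \<in> Tr a b lam \<mu>"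
            using \<rho>(1) Tr_conj_a(1)[OF l0(1,2) s(1)] Tr_conj_b(1)[OF l0(1,2) s(1)] by auto
          obtain m k :: int where mk:
            "cmod ((w - t0) - (of_int m * s + of_int k * (\<rho> * s))) \<le> cmod s * (1 + cmod \<rho>) / 2"
            using lattice_approx[OF \<rho>(2) s(2)] by blast
          define \<sigma> where "\<sigma> = of_int m * s + of_int k * (\<rho> * s)"
          have "\<sigma> \<in> Tr a b lam \<mu>"
            unfolding \<sigma>_def by (intro Tr_add Tr_int[OF l0(1,2)] s(1) \<rho>s)
          then obtain h where h: "h \<in> ?G" "\<forall>t. h (PL a b t) = PL a b (t + \<sigma>)"
            unfolding Tr_def by blast
          have "dist (h z) y = cmod ((w - t0) - \<sigma>) * norm (b - a)"
            using h(2) z y by (simp add: dist_PL norm_minus_commute algebra_simps)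
          also have "\<dots> \<le> cmod s * (1 + cmod \<rho>) / 2 * norm (b - a)"
            using mk by (intro mult_right_mono) (auto simp: \<sigma>_def)
          also have "\<dots> \<le> cmod s * (1 + cmod \<rho>) * norm (b - a)"
            by (intro mult_right_mono) auto
          also have "\<dots> = cmod \<nu> ^ n * D"
            by (simp add: s_def D_def norm_mult norm_power)
          also have "\<dots> < e" using n D by (simp add: pos_less_divide_eq)
          finally have "dist (h z) y < e" .
          moreover have "h z \<in> orbit ?G z" using h(1) by (auto simp: orbit_iff)
          ultimately show "\<exists>x\<in>orbit ?G z. dist x y < e" by blast
        qed
      qed
    qed
  qed
  show "closure (orbit ?G z) = cline a b" using up low by blast
qed

end
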